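(* Let $S$ be an abundant semigroup with a quasi-ideal adequate transversal $S^0$, let $R=\{x\in S:e_x=e_{\bar x}\}$, $L=\{x\in S:f_x=f_{\bar x}\}$ and let $T=\{(x,a)\in L\times R:\bar x=\bar a\}$ with multiplication $(x,a)(y,b)=(e_xay,\,ayf_b)$ (products in $S$). Then $$E(T)=\{(e_y\bar y,\ \bar yf_y): y\in E(S)\}.$$ Moreover, if $(x,a)\in E(T)$ then $x$ and $a$ are regular elements of $S$.
   Context: $E(\cdot)$ denotes the set of idempotents. For a semigroup $S$, $\mathcal{R}^\ast=\{(a,b): \text{for all } x,y\in S^1,\ xa=ya \iff xb=yb\}$ and $\mathcal{L}^\ast$ dually. $S$ is abundant if every $\mathcal{R}^\ast$-class and $\mathcal{L}^\ast$-class contains an idempotent; adequate if abundant with commuting idempotents. In an adequate semigroup $a^+,a^\ast$ are the unique idempotents $\mathcal{R}^\ast$-, resp. $\mathcal{L}^\ast$-related to $a$. A subsemigroup $U$ of abundant $S$ is a $\ast$-subsemigroup if $U$ is abundant and $\mathcal{L}^\ast_U=\mathcal{L}^\ast_S\cap(U\times U)$, $\mathcal{R}^\ast_U=\mathcal{R}^\ast_S\cap(U\times U)$. An adequate $\ast$-subsemigroup $S^0$ of abundant $S$ is an adequate transversal if for each $x\in S$ there is a unique $\bar x\in S^0$ and idempotents $e,f$ of $S$ with $x=e\bar xf$, $e\,\mathcal{L}\,\bar x^+$, $f\,\mathcal{R}\,\bar x^\ast$; these $e,f$ are unique and denoted $e_x,f_x$. It is a quasi-ideal adequate transversal if moreover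 $S^0SS^0\subseteq S^0$. *)

theory Defs
  imports Main
begin

text \<open>The semigroup S is the whole carrier of a type of class semigroup_mult.
  Subsemigroups are given as subsets U. Elements of S^1 are modelled as
  'a option, None standing for the adjoined identity.\<close>

definition idems :: "'a::semigroup_mult set \<Rightarrow> 'a set" where
  "idems U = {e \<in> U. e * e = e}"

fun lmul1 :: "'a::semigroup_mult option \<Rightarrow> 'a \<Rightarrow> 'a" where
  "lmul1 None a = a"
| "lmul1 (Some x) a = x * a"

fun rmul1 :: "'a::semigroup_mult \<Rightarrow> 'a option \<Rightarrow> 'a" where
  "rmul1 a None = a"
| "rmul1 a (Some x) = a * x"

definition Rstar :: "'a::semigroup_mult set \<Rightarrow> 'a \<Rightarrow> 'a \<Rightarrow> bool" where
  "Rstar U a b \<longleftrightarrow> (\<forall>x \<in> insert None (Some ` U). \<forall>y \<in> insert None (Some ` U).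
      (lmul1 x a = lmul1 y a \<longleftrightarrow> lmul1 x b = lmul1 y b))"

definition Lstar :: "'a::semigroup_mult set \<Rightarrow> 'a \<Rightarrow> 'a \<Rightarrow> bool" where
  "Lstar U a b \<longleftrightarrow> (\<forall>x \<in> insert None (Some ` U). \<forall>y \<in> insert None (Some ` U).
      (rmul1 a x = rmul1 a y \<longleftrightarrow> rmul1 b x = rmul1 b y))"

definition GreenL :: "'a::semigroup_mult \<Rightarrow> 'a \<Rightarrow> bool" where
  "GreenL a b \<longleftrightarrow> (a = b \<or> (\<exists>s. a = s * b)) \<and> (b = a \<or> (\<exists>s. b = s * a))"

definition GreenR :: "'a::semigroup_mult \<Rightarrow> 'a \<Rightarrow> bool" where
  "GreenR a b \<longleftrightarrow> (a = b \<or> (\<exists>s. a = b * s)) \<and> (b = a \<or> (\<exists>s. b = a * s))"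

definition subsemigroup :: "'a::semigroup_mult set \<Rightarrow> bool" where
  "subsemigroup U \<longleftrightarrow> (\<forall>a\<in>U. \<forall>b\<in>U. a * b \<in> U)"

definition abundant :: "'a::semigroup_mult set \<Rightarrow> bool" where
  "abundant U \<longleftrightarrow> subsemigroup U \<and>
     (\<forall>a\<in>U. (\<exists>e\<in>idems U. Rstar U a e) \<and> (\<exists>f\<in>idems U. Lstar U a f))"

definition adequate :: "'a::semigroup_mult set \<Rightarrow> bool" where
  "adequate U \<longleftrightarrow> abundant U \<and> (\<forall>e\<in>idems U. \<forall>f\<in>idems U. e * f = f * e)"

definition star_subsemigroup :: "'a::semigroup_mult set \<Rightarrow> bool" where
  "star_subsemigroup U \<longleftrightarrow> subsemigroup U \<and> abundant U \<and>
     (\<forall>a\<in>U. \<forall>b\<in>U. Lstar U a b \<longleftrightarrow> Lstar UNIV a b) \<and>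
     (\<forall>a\<in>U. \<forall>b\<in>U. Rstar U a b \<longleftrightarrow> Rstar UNIV a b)"

definition plus_of :: "'a::semigroup_mult set \<Rightarrow> 'a \<Rightarrow> 'a" where
  "plus_of U a = (THE e. e \<in> idems U \<and> Rstar U a e)"

definition ast_of :: "'a::semigroup_mult set \<Rightarrow> 'a \<Rightarrow> 'a" where
  "ast_of U a = (THE e. e \<in> idems U \<and> Lstar U a e)"

definition decomp :: "'a::semigroup_mult set \<Rightarrow> 'a \<Rightarrow> 'a \<Rightarrow> 'a \<Rightarrow> 'a \<Rightarrow> bool" where
  "decomp S0 x xb e f \<longleftrightarrow> xb \<in> S0 \<and> e \<in> idems UNIV \<and> f \<in> idems UNIV \<and>
     x = e * xb * f \<and> GreenL e (plus_of S0 xb) \<and> GreenR f (ast_of S0 xb)"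

definition adequate_transversal :: "'a::semigroup_mult set \<Rightarrow> bool" where
  "adequate_transversal S0 \<longleftrightarrow> adequate S0 \<and> star_subsemigroup S0 \<and>
     (\<forall>x. \<exists>!xb. \<exists>e f. decomp S0 x xb e f)"

definition quasi_ideal_adequate_transversal :: "'a::semigroup_mult set \<Rightarrow> bool" where
  "quasi_ideal_adequate_transversal S0 \<longleftrightarrow> adequate_transversal S0 \<and>
     (\<forall>a\<in>S0. \<forall>s. \<forall>b\<in>S0. a * s * b \<in> S0)"

definition bar :: "'a::semigroup_mult set \<Rightarrow> 'a \<Rightarrow> 'a" where
  "bar S0 x = (THE xb. \<exists>e f. decomp S0 x xb e f)"

definition e_of :: "'a::semigroup_mult set \<Rightarrow> 'a \<Rightarrow> 'a" where
  "e_of S0 x = (THE e. \<exists>f. decomp S0 x (bar S0 x) e f)"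

definition f_of :: "'a::semigroup_mult set \<Rightarrow> 'a \<Rightarrow> 'a" where
  "f_of S0 x = (THE f. \<exists>e. decomp S0 x (bar S0 x) e f)"

definition regular :: "'a::semigroup_mult \<Rightarrow> bool" where
  "regular x \<longleftrightarrow> (\<exists>y. x * y * x = x)"

definition Rset :: "'a::semigroup_mult set \<Rightarrow> 'a set" where
  "Rset S0 = {x. e_of S0 x = e_of S0 (bar S0 x)}"

definition Lset :: "'a::semigroup_mult set \<Rightarrow> 'a set" where
  "Lset S0 = {x. f_of S0 x = f_of S0 (bar S0 x)}"

definition Tset :: "'a::semigroup_mult set \<Rightarrow> ('a \<times> 'a) set" where
  "Tset S0 = {(x, a). x \<in> Lset S0 \<and> a \<in> Rset S0 \<and> bar S0 x = bar S0 a}"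

definition Tmul :: "'a::semigroup_mult set \<Rightarrow> 'a \<times> 'a \<Rightarrow> 'a \<times> 'a \<Rightarrow> 'a \<times> 'a" where
  "Tmul S0 p q = (case p of (x, a) \<Rightarrow> case q of (y, b) \<Rightarrow>
      (e_of S0 x * a * y, a * y * f_of S0 b))"

definition ET :: "'a::semigroup_mult set \<Rightarrow> ('a \<times> 'a) set" where
  "ET S0 = {p \<in> Tset S0. Tmul S0 p p = p}"

end

theory Submission
  imports Defs
begin

lemma Rstar_trans_use:
  assumes "Rstar U a b" "Rstar U a c" "x \<in> insert None (Some ` U)" "y \<in> insert None (Some ` U)"
    "lmul1 x b = lmul1 y b"
  shows "lmul1 x c = lmul1 y c"
  using assms unfolding Rstar_def by blast

lemma Lstar_trans_use:
  assumes "Lstar U a b" "Lstar U a c" "x \<in> insert None (Some ` U)" "y \<in> insert None (Some ` U)"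
    "rmul1 b x = rmul1 b y"
  shows "rmul1 c x = rmul1 c y"
  using assms unfolding Lstar_def by blast

lemma Rstar_idem_left:
  assumes "Rstar U a e" "e \<in> U" "e * e = e" shows "e * a = a"
proof -
  have "lmul1 (Some e) e = lmul1 None e" using assms by simp
  then have "lmul1 (Some e) a = lmul1 None a"
    using assms(1,2) unfolding Rstar_def by blast
  then show ?thesis by simp
qed

lemma Lstar_idem_right:
  assumes "Lstar U a e" "e \<in> U" "e * e = e" shows "a * e = a"
proof -
  have "rmul1 e (Some e) = rmul1 e None" using assms by simp
  then have "rmul1 a (Some e) = rmul1 a None"
    using assms(1,2) unfolding Lstar_def by blast
  then show ?thesis by simp
qed

lemma plus_of_prop:
  assumes "adequate S0" "u \<in> S0"
  shows "plus_of S0 u \<in> idems S0 \<and> Rstar S0 u (plus_of S0 u)"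
proof -
  have ab: "\<forall>a\<in>S0. (\<exists>e\<in>idems S0. Rstar S0 a e) \<and> (\<exists>f\<in>idems S0. Lstar S0 a f)"
    using assms(1) unfolding adequate_def abundant_def by simp
  obtain e where e: "e \<in> idems S0" "Rstar S0 u e"
    using bspec[OF ab assms(2)] by blast
  have uniq: "e' = e" if "e' \<in> idems S0" "Rstar S0 u e'" for e'
  proof -
    have ee: "e * e = e" "e \<in> S0" and ee': "e' * e' = e'" "e' \<in> S0"
      using e that by (auto simp: idems_def)
    have "lmul1 (Some e') e' = lmul1 None e'" using ee' by simp
    then have "lmul1 (Some e') e = lmul1 None e"
      using Rstar_trans_use[OF that(2) e(2)] ee' by blast
    then have 1: "e' * e = e" by simp
    have "lmul1 (Some e) e = lmul1 None e" using ee by simp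
    then have "lmul1 (Some e) e' = lmul1 None e'"
      using Rstar_trans_use[OF e(2) that(2)] ee by blast
    then have 2: "e * e' = e'" by simp
    have cm: "\<forall>e\<in>idems S0. \<forall>f\<in>idems S0. e * f = f * e" using assms(1) unfolding adequate_def by simp
    have "e * e' = e' * e" using bspec[OF bspec[OF cm e(1)] that(1)] .
    then show ?thesis using 1 2 by simp
  qed
  have "plus_of S0 u = e" unfolding plus_of_def
    by (rule the_equality) (use e uniq in blast)+
  then show ?thesis using e by simp
qed

lemma ast_of_prop:
  assumes "adequate S0" "u \<in> S0"
  shows "ast_of S0 u \<in> idems S0 \<and> Lstar S0 u (ast_of S0 u)"
proof -
  have ab: "\<forall>a\<in>S0. (\<exists>e\<in>idems S0. Rstar S0 a e) \<and> (\<exists>f\<in>idems S0. Lstar S0 a f)"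
    using assms(1) unfolding adequate_def abundant_def by simp
  obtain e where e: "e \<in> idems S0" "Lstar S0 u e"
    using bspec[OF ab assms(2)] by blast
  have uniq: "e' = e" if "e' \<in> idems S0" "Lstar S0 u e'" for e'
  proof -
    have ee: "e * e = e" "e \<in> S0" and ee': "e' * e' = e'" "e' \<in> S0"
      using e that by (auto simp: idems_def)
    have "rmul1 e' (Some e') = rmul1 e' None" using ee' by simp
    then have "rmul1 e (Some e') = rmul1 e None"
      using Lstar_trans_use[OF that(2) e(2)] ee' by blast
    then have 1: "e * e' = e" by simp
    have "rmul1 e (Some e) = rmul1 e None" using ee by simp
    then have "rmul1 e' (Some e) = rmul1 e' None"
      using Lstar_trans_use[OF e(2) that(2)] ee by blast
    then have 2: "e' * e = e'" by simp
    have cm: "\<forall>e\<in>idems S0. \<forall>f\<in>idems S0. e * f = f * e" using assms(1) unfolding adequate_def by simp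
    have "e * e' = e' * e" using bspec[OF bspec[OF cm e(1)] that(1)] .
    then show ?thesis using 1 2 by simp
  qed
  have "ast_of S0 u = e" unfolding ast_of_def
    by (rule the_equality) (use e uniq in blast)+
  then show ?thesis using e by simp
qed

lemma plus_facts:
  assumes "adequate_transversal S0" "u \<in> S0"
  shows "plus_of S0 u * plus_of S0 u = plus_of S0 u" "plus_of S0 u * u = u"
    "Rstar UNIV u (plus_of S0 u)" "plus_of S0 u \<in> S0"
proof -
  have A: "adequate S0" "star_subsemigroup S0" using assms unfolding adequate_transversal_def by auto
  note p = plus_of_prop[OF A(1) assms(2)]
  show "plus_of S0 u * plus_of S0 u = plus_of S0 u" "plus_of S0 u \<in> S0"
    using p by (auto simp: idems_def)
  then show "plus_of S0 u * u = u" using p Rstar_idem_left by blast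
  show "Rstar UNIV u (plus_of S0 u)" using p A(2) assms(2) \<open>plus_of S0 u \<in> S0\<close>
    unfolding star_subsemigroup_def by blast
qed

lemma ast_facts:
  assumes "adequate_transversal S0" "u \<in> S0"
  shows "ast_of S0 u * ast_of S0 u = ast_of S0 u" "u * ast_of S0 u = u"
    "Lstar UNIV u (ast_of S0 u)" "ast_of S0 u \<in> S0"
proof -
  have A: "adequate S0" "star_subsemigroup S0" using assms unfolding adequate_transversal_def by auto
  note p = ast_of_prop[OF A(1) assms(2)]
  show "ast_of S0 u * ast_of S0 u = ast_of S0 u" "ast_of S0 u \<in> S0"
    using p by (auto simp: idems_def)
  then show "u * ast_of S0 u = u" using p Lstar_idem_right by blast
  show "Lstar UNIV u (ast_of S0 u)" using p A(2) assms(2) \<open>ast_of S0 u \<in> S0\<close>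
    unfolding star_subsemigroup_def by blast
qed

lemma GreenL_idem:
  assumes "GreenL e p" "e * e = e" "p * p = p"
  shows "e * p = e" "p * e = p"
proof -
  from assms(1) have "e = p \<or> (\<exists>s. e = s * p)" "p = e \<or> (\<exists>s. p = s * e)"
    unfolding GreenL_def by auto
  then show "e * p = e" "p * e = p" using assms(2,3)
    by (auto simp: mult.assoc) (metis mult.assoc)+
qed

lemma GreenR_idem:
  assumes "GreenR f p" "f * f = f" "p * p = p"
  shows "p * f = f" "f * p = p"
proof -
  from assms(1) have "f = p \<or> (\<exists>s. f = p * s)" "p = f \<or> (\<exists>s. p = f * s)"
    unfolding GreenR_def by auto
  then show "p * f = f" "f * p = p" using assms(2,3)
    by (auto simp: mult.assoc) (metis mult.assoc)+
qed

lemma decomp_unique_ef: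
  assumes T: "adequate_transversal S0"
    and d1: "decomp S0 x u e f" and d2: "decomp S0 x u e' f'"
  shows "e = e' \<and> f = f'"
proof -
  have u: "u \<in> S0" using d1 by (simp add: decomp_def)
  let ?P = "plus_of S0 u" and ?A = "ast_of S0 u"
  note pf = plus_facts[OF T u] and af = ast_facts[OF T u]
  have ie: "e * e = e" "f * f = f" "e' * e' = e'" "f' * f' = f'"
    using d1 d2 by (auto simp: decomp_def idems_def)
  have gl: "GreenL e ?P" "GreenL e' ?P" "GreenR f ?A" "GreenR f' ?A"
    using d1 d2 by (auto simp: decomp_def)
  have x1: "x = e * u * f" and x2: "x = e' * u * f'" using d1 d2 by (auto simp: decomp_def)
  note L1 = GreenL_idem[OF gl(1) ie(1) pf(1)] and L2 = GreenL_idem[OF gl(2) ie(3) pf(1)]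
  note R1 = GreenR_idem[OF gl(3) ie(2) af(1)] and R2 = GreenR_idem[OF gl(4) ie(4) af(1)]
  have "?P * x = u * f" using x1 L1 pf by (simp add: mult.assoc[symmetric])
  moreover have "?P * x = u * f'" using x2 L2 pf by (simp add: mult.assoc[symmetric])
  ultimately have "rmul1 u (Some f) = rmul1 u (Some f')" by simp
  then have "rmul1 ?A (Some f) = rmul1 ?A (Some f')"
    using af(3) unfolding Lstar_def by blast
  then have ff: "f = f'" using R1 R2 by simp
  have "x * ?A = e * u" using x1 R1 af by (simp add: mult.assoc)
  moreover have "x * ?A = e' * u" using x2 R2 af by (simp add: mult.assoc)
  ultimately have "lmul1 (Some e) u = lmul1 (Some e') u" by simp
  then have "lmul1 (Some e) ?P = lmul1 (Some e') ?P"
    using pf(3) unfolding Rstar_def by blast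
  then have "e = e'" using L1 L2 by simp
  with ff show ?thesis by simp
qed

lemma decomp_determines:
  assumes T: "adequate_transversal S0" and d: "decomp S0 x u e f"
  shows "bar S0 x = u" "e_of S0 x = e" "f_of S0 x = f"
proof -
  have ex1: "\<exists>!xb. \<exists>e f. decomp S0 x xb e f" using T unfolding adequate_transversal_def by simp
  show b: "bar S0 x = u"
  proof -
    have "\<exists>e f. decomp S0 x u e f" using d by blast
    from the1_equality[OF ex1 this] show ?thesis by (simp add: bar_def)
  qed
  show "e_of S0 x = e" unfolding e_of_def b
  proof (rule the_equality)
    show "\<exists>f. decomp S0 x u e f" using d by blast
  next
    fix e' assume "\<exists>f. decomp S0 x u e' f"
    then obtain f' where "decomp S0 x u e' f'" by blast
    from decomp_unique_ef[OF T d this] show "e' = e" by simp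
  qed
  show "f_of S0 x = f" unfolding f_of_def b
  proof (rule the_equality)
    show "\<exists>e. decomp S0 x u e f" using d by blast
  next
    fix f' assume "\<exists>e. decomp S0 x u e f'"
    then obtain e' where "decomp S0 x u e' f'" by blast
    from decomp_unique_ef[OF T d this] show "f' = f" by simp
  qed
qed

lemma decomp_exists:
  assumes T: "adequate_transversal S0"
  shows "decomp S0 x (bar S0 x) (e_of S0 x) (f_of S0 x)"
proof -
  have ex1: "\<exists>!xb. \<exists>e f. decomp S0 x xb e f" using T unfolding adequate_transversal_def by simp
  then have "\<exists>xb e f. decomp S0 x xb e f" by (rule ex1_implies_ex)
  then obtain u e f where d: "decomp S0 x u e f" by blast
  then show ?thesis using decomp_determines[OF T d] by simp
qed

lemma decomp_S0:
  assumes T: "adequate_transversal S0" and u: "u \<in> S0"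
  shows "decomp S0 u u (plus_of S0 u) (ast_of S0 u)"
  using plus_facts[OF T u] ast_facts[OF T u] u
  unfolding decomp_def idems_def GreenL_def GreenR_def by (simp add: mult.assoc)

lemma S0_facts:
  assumes T: "adequate_transversal S0" and u: "u \<in> S0"
  shows "bar S0 u = u" "e_of S0 u = plus_of S0 u" "f_of S0 u = ast_of S0 u"
  using decomp_determines[OF T decomp_S0[OF T u]] by auto

lemma bar_in: assumes T: "adequate_transversal S0" shows "bar S0 x \<in> S0"
  using decomp_exists[OF T] by (simp add: decomp_def)

theorem lemma2p6:
  fixes S0 :: "'a::semigroup_mult set"
  assumes "abundant (UNIV :: 'a set)"
    and "quasi_ideal_adequate_transversal S0"
  shows "ET S0 = {(e_of S0 y * bar S0 y, bar S0 y * f_of S0 y) | y. y \<in> idems UNIV}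
    \<and> (\<forall>x a. (x, a) \<in> ET S0 \<longrightarrow> regular x \<and> regular a)"
proof -
  have T: "adequate_transversal S0" using assms(2) unfolding quasi_ideal_adequate_transversal_def by simp
  have sub: "(x, a) \<in> {(e_of S0 y * bar S0 y, bar S0 y * f_of S0 y) | y. y \<in> idems UNIV}
     \<and> regular x \<and> regular a" if xa: "(x, a) \<in> ET S0" for x a
  proof -
    have xL: "f_of S0 x = f_of S0 (bar S0 x)" and aR: "e_of S0 a = e_of S0 (bar S0 a)"
      and ba: "bar S0 x = bar S0 a" and tm: "Tmul S0 (x, a) (x, a) = (x, a)"
      using xa by (auto simp: ET_def Tset_def Lset_def Rset_def)
    define u where "u = bar S0 x"
    have u: "u \<in> S0" unfolding u_def by (rule bar_in[OF T])
    define e where "e = e_of S0 x"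
    define f where "f = f_of S0 a"
    have dx: "decomp S0 x u e (ast_of S0 u)"
      using decomp_exists[OF T, of x] xL S0_facts[OF T u] unfolding u_def e_def by simp
    have da: "decomp S0 a u (plus_of S0 u) f"
      using decomp_exists[OF T, of a] aR S0_facts[OF T u] ba unfolding u_def f_def by simp
    note pf = plus_facts[OF T u] and af = ast_facts[OF T u]
    have xe: "x = e * u" using dx af(2) by (simp add: decomp_def mult.assoc)
    have ae: "a = u * f" using da pf(2) by (simp add: decomp_def)
    have h: "e * a * x = x" "a * x * f = a"
      using tm unfolding Tmul_def e_def f_def by auto
    have h1: "e * u * f * e * u = e * u" using h(1) xe ae by (simp add: mult.assoc)
    have h2: "u * f * e * u * f = u * f" using h(2) xe ae by (simp add: mult.assoc)
    define y where "y = e * u * f"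
    have "y * y = (e * u * f * e * u) * f" unfolding y_def by (simp add: mult.assoc)
    then have yy: "y * y = y" unfolding h1 y_def .
    have dy: "decomp S0 y u e f" using dx da unfolding decomp_def y_def by simp
    note yd = decomp_determines[OF T dy]
    have mem: "(x, a) \<in> {(e_of S0 y * bar S0 y, bar S0 y * f_of S0 y) | y. y \<in> idems UNIV}"
    proof -
      have "x = e_of S0 y * bar S0 y \<and> a = bar S0 y * f_of S0 y" using yd xe ae by simp
      moreover have "y \<in> idems UNIV" using yy by (simp add: idems_def)
      ultimately show ?thesis by blast
    qed
    have "x * f * x = x" using h1 xe by (simp add: mult.assoc)
    moreover have "a * e * a = a" using h2 ae by (simp add: mult.assoc)
    ultimately show ?thesis using mem unfolding regular_def by blast
  qed
  have sup: "p \<in> ET S0" if p: "p \<in> {(e_of S0 y * bar S0 y, bar S0 y * f_of S0 y) | y. y \<in> idems UNIV}" for p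
  proof -
    obtain y where y: "y * y = y" and pdef: "p = (e_of S0 y * bar S0 y, bar S0 y * f_of S0 y)"
      using p by (auto simp: idems_def)
    define u where "u = bar S0 y"
    define e where "e = e_of S0 y"
    define f where "f = f_of S0 y"
    have u: "u \<in> S0" unfolding u_def by (rule bar_in[OF T])
    have dy: "decomp S0 y u e f" using decomp_exists[OF T, of y] unfolding u_def e_def f_def .
    note pf = plus_facts[OF T u] and af = ast_facts[OF T u]
    have ie: "e * e = e" "f * f = f" using dy by (auto simp: decomp_def idems_def)
    have gl: "GreenL e (plus_of S0 u)" "GreenR f (ast_of S0 u)" using dy by (auto simp: decomp_def)
    note L = GreenL_idem[OF gl(1) ie(1) pf(1)] and R = GreenR_idem[OF gl(2) ie(2) af(1)]
    have yv: "y = e * u * f" using dy by (simp add: decomp_def)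
    have dx: "decomp S0 (e * u) u e (ast_of S0 u)"
      using dy af unfolding decomp_def idems_def GreenR_def by (simp add: mult.assoc)
    have da: "decomp S0 (u * f) u (plus_of S0 u) f"
      using dy pf unfolding decomp_def idems_def GreenL_def by (simp add: mult.assoc)
    note xd = decomp_determines[OF T dx] and ad = decomp_determines[OF T da]
    note sd = S0_facts[OF T u]
    have inT: "(e * u, u * f) \<in> Tset S0"
      using xd ad sd by (simp add: Tset_def Lset_def Rset_def)
    have yy: "e * (u * (f * (e * (u * f)))) = e * (u * f)" using y yv by (simp add: mult.assoc)
    have "e * (u * (f * (e * (u * (f * ast_of S0 u))))) = e * (u * (f * ast_of S0 u))"
    proof -
      have "(e * (u * (f * (e * (u * f))))) * ast_of S0 u = (e * (u * f)) * ast_of S0 u"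
        using yy by simp
      then show ?thesis by (simp only: mult.assoc)
    qed
    then have h1: "e * u * f * e * u = e * u" using R af by (simp add: mult.assoc)
    have Pu: "plus_of S0 u * (u * z) = u * z" for z using pf(2) by (simp add: mult.assoc[symmetric])
    have Pe: "plus_of S0 u * (e * z) = plus_of S0 u * z" for z using L(2) by (simp add: mult.assoc[symmetric])
    have "plus_of S0 u * (e * (u * (f * (e * (u * f))))) = plus_of S0 u * (e * (u * f))"
      using yy by simp
    then have h2: "u * f * e * u * f = u * f" using Pu Pe by (simp add: mult.assoc)
    have "Tmul S0 (e * u, u * f) (e * u, u * f) = (e * u, u * f)"
      unfolding Tmul_def using xd ad h1 h2 by (simp add: mult.assoc)
    with inT have "(e * u, u * f) \<in> ET S0" unfolding ET_def by blast
    moreover have "p = (e * u, u * f)" using pdef unfolding e_def f_def u_def .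
    ultimately show ?thesis by simp
  qed
  have "ET S0 = {(e_of S0 y * bar S0 y, bar S0 y * f_of S0 y) | y. y \<in> idems UNIV}"
  proof (rule set_eqI)
    fix p :: "'a \<times> 'a"
    obtain x a where p: "p = (x, a)" by (cases p)
    show "p \<in> ET S0 \<longleftrightarrow> p \<in> {(e_of S0 y * bar S0 y, bar S0 y * f_of S0 y) | y. y \<in> idems UNIV}"
      using sub[of x a] sup[of p] unfolding p by blast
  qed
  moreover have "\<forall>x a. (x, a) \<in> ET S0 \<longrightarrow> regular x \<and> regular a"
    using sub by blast
  ultimately show ?thesis by blast
qed

end
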